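(* Let $X,Y$ be finite abelian groups, $Q\in M_{X\times Y}(\mathbb T)$, and for $i\in X$, $c\in Y$ let $P_c^{(i)}=\sum_{a\in Y}\sum_{j\in X}L_{ac}W_{ia,j0}\in M_{X\times Y}(\mathbb C)$ (the image of $c^{(i)}=\sum_aL_{ac}u^{(i)}_{a0}$). For $k\in X$, $e\in Y$ let $\varepsilon_{ke}=\sum_{x\in X}F_{xk}e_{xe}$, where $(e_{xe})$ is the standard basis of $\mathbb C^{X\times Y}$. Then $$P_c^{(i)}(\varepsilon_{ke})=\frac{Q_{i,e-c}Q_{i-k,e}}{Q_{ie}Q_{i-k,e-c}}\,\varepsilon_{k,e-c}.$$ In particular, if $c_1+\dots+c_s=0$, then $P_{c_1}^{(i_1)}\cdots P_{c_s}^{(i_s)}$ is diagonal in the basis $(\varepsilon_{ke})$, for any $i_1,\dots,i_s\in X$.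
   Context: Finite abelian groups are written additively. For a finite abelian group $Z\simeq\mathbb Z_{N_1}\times\cdots\times\mathbb Z_{N_s}$, $F_Z=F_{N_1}\otimes\cdots\otimes F_{N_s}$ with $F_n=(e^{2\pi ijk/n})_{j,k\in\mathbb Z_n}$. Let $F=F_X$, $L=F_Y$, $M=|X|$, $N=|Y|$, and define $W_{ia,jb}\in M_{X\times Y}(\mathbb C)$ by $(W_{ia,jb})_{kc,ld}=\frac{1}{MN}\frac{Q_{ic}Q_{jd}}{Q_{id}Q_{jc}}F_{i-j,k-l}L_{a-b,c-d}$ ($i,j,k,l\in X$, $a,b,c,d\in Y$). *)

theory Defs
  imports Complex_Main
begin

text \<open>A finite abelian group Z = Z_{N_1} x ... x Z_{N_s} is represented by the list
  of moduli ns = [N_1,...,N_s]; its elements are lists of residues.\<close>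

definition grp :: "nat list \<Rightarrow> nat list set" where
  "grp ns = {x. length x = length ns \<and> (\<forall>t<length ns. x ! t < ns ! t)}"

definition gzero :: "nat list \<Rightarrow> nat list" where
  "gzero ns = replicate (length ns) 0"

definition gadd :: "nat list \<Rightarrow> nat list \<Rightarrow> nat list \<Rightarrow> nat list" where
  "gadd ns x y = map (\<lambda>t. (x ! t + y ! t) mod (ns ! t)) [0..<length ns]"

definition gneg :: "nat list \<Rightarrow> nat list \<Rightarrow> nat list" where
  "gneg ns x = map (\<lambda>t. (ns ! t - x ! t) mod (ns ! t)) [0..<length ns]"

definition gsub :: "nat list \<Rightarrow> nat list \<Rightarrow> nat list \<Rightarrow> nat list" where
  "gsub ns x y = gadd ns x (gneg ns y)"

definition fourier :: "nat list \<Rightarrow> nat list \<Rightarrow> nat list \<Rightarrow> complex" where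
  "fourier ns j k = (\<Prod>t<length ns. cis (2 * pi * real (j ! t * k ! t) / real (ns ! t)))"

type_synonym idx = "nat list \<times> nat list"

definition matvec :: "nat list \<Rightarrow> nat list \<Rightarrow> (idx \<Rightarrow> idx \<Rightarrow> complex) \<Rightarrow> (idx \<Rightarrow> complex) \<Rightarrow> idx \<Rightarrow> complex" where
  "matvec ns ms A v = (\<lambda>r. \<Sum>s\<in>grp ns \<times> grp ms. A r s * v s)"

definition Wmat :: "nat list \<Rightarrow> nat list \<Rightarrow> (nat list \<Rightarrow> nat list \<Rightarrow> complex)
    \<Rightarrow> nat list \<Rightarrow> nat list \<Rightarrow> nat list \<Rightarrow> nat list \<Rightarrow> idx \<Rightarrow> idx \<Rightarrow> complex" where
  "Wmat ns ms Q i a j b = (\<lambda>(k, c) (l, d).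
     1 / (of_nat (card (grp ns)) * of_nat (card (grp ms)))
     * (Q i c * Q j d / (Q i d * Q j c))
     * fourier ns (gsub ns i j) (gsub ns k l) * fourier ms (gsub ms a b) (gsub ms c d))"

definition Pmat :: "nat list \<Rightarrow> nat list \<Rightarrow> (nat list \<Rightarrow> nat list \<Rightarrow> complex)
    \<Rightarrow> nat list \<Rightarrow> nat list \<Rightarrow> idx \<Rightarrow> idx \<Rightarrow> complex" where
  "Pmat ns ms Q i c = (\<lambda>r s. \<Sum>a\<in>grp ms. \<Sum>j\<in>grp ns.
      fourier ms a c * Wmat ns ms Q i a j (gzero ms) r s)"

definition eps :: "nat list \<Rightarrow> nat list \<Rightarrow> nat list \<Rightarrow> idx \<Rightarrow> complex" where
  "eps ns k e = (\<lambda>(x, e'). if e' = e then fourier ns x k else 0)"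

definition Pprod_apply :: "nat list \<Rightarrow> nat list \<Rightarrow> (nat list \<Rightarrow> nat list \<Rightarrow> complex)
    \<Rightarrow> (nat list \<times> nat list) list \<Rightarrow> (idx \<Rightarrow> complex) \<Rightarrow> idx \<Rightarrow> complex" where
  "Pprod_apply ns ms Q ics v = foldr (\<lambda>(i, c) w. matvec ns ms (Pmat ns ms Q i c) w) ics v"

end

theory Submission
  imports Defs
begin

definition chr :: "nat \<Rightarrow> int \<Rightarrow> complex" where
  "chr n a = cis (2 * pi * of_int a / real n)"

lemma chr_add: "chr n (a + b) = chr n a * chr n b"
  by (simp add: chr_def cis_mult add_divide_distrib distrib_left)

lemma chr_mult_n: "0 < n \<Longrightarrow> chr n (int n * q) = 1"
proof -
  assume "0 < n"
  then have "2 * pi * of_int (int n * q) / real n = 2 * pi * of_int q" by simp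
  then show ?thesis unfolding chr_def by simp
qed

lemma chr_cong: assumes "0 < n" "a mod int n = b mod int n" shows "chr n a = chr n b"
proof -
  obtain q where "a = b + int n * q"
    using assms(2) by (metis mod_eq_dvd_iff dvd_def eq_diff_eq add.commute)
  then show ?thesis using chr_add chr_mult_n[OF assms(1)] by simp
qed

lemma chr_pow: "chr n a ^ m = chr n (int m * a)"
  by (simp add: chr_def DeMoivre mult_ac)

lemma chr_eq_1: assumes "0 < n" "chr n u = 1" shows "u mod int n = 0"
proof -
  from assms(2) have "cos (2 * pi * of_int u / real n) = 1"
    unfolding chr_def by (auto simp: complex_eq_iff)
  then obtain k :: int where k: "2 * pi * of_int u / real n = of_int k * 2 * pi"
    by (auto simp: cos_one_2pi_int)
  then have "real_of_int u = real n * of_int k" using assms(1) by (simp add: field_simps)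
  then have "u = int n * k" by (metis of_int_eq_iff of_int_mult of_int_of_nat_eq)
  then show ?thesis by simp
qed

lemma sum_chr: assumes "0 < n"
  shows "(\<Sum>a<n. chr n (int a * u)) = (if u mod int n = 0 then of_nat n else 0)"
proof (cases "u mod int n = 0")
  case True
  then have "\<And>a. chr n (int a * u) = 1"
    using chr_cong[OF assms, of "int _ * u" 0] by (simp add: chr_def mod_mult_right_eq[symmetric])
  then show ?thesis using True by simp
next
  case False
  define w where "w = chr n u"
  have w1: "w \<noteq> 1" using chr_eq_1[OF assms, of u] False unfolding w_def by blast
  have "(\<Sum>a<n. chr n (int a * u)) = (\<Sum>a<n. w ^ a)" by (simp add: w_def chr_pow)
  also have "\<dots> = (w ^ n - 1) / (w - 1)" using w1 by (rule geometric_sum)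
  also have "w ^ n = 1" using chr_mult_n[OF assms] by (simp add: w_def chr_pow)
  finally show ?thesis using False by simp
qed

lemma grp_Nil: "grp [] = {[]}" by (auto simp: grp_def)

lemma grp_Cons: "grp (n#ns) = (\<lambda>(a,x). a#x) ` ({..<n} \<times> grp ns)"
proof (rule set_eqI)
  fix z show "z \<in> grp (n#ns) \<longleftrightarrow> z \<in> (\<lambda>(a,x). a#x) ` ({..<n} \<times> grp ns)"
  proof
    assume z: "z \<in> grp (n#ns)"
    then obtain a x where zx: "z = a#x" by (cases z) (auto simp: grp_def)
    have "a < n" using z zx by (auto simp: grp_def)
    moreover have "x \<in> grp ns" using z zx by (fastforce simp: grp_def)
    ultimately show "z \<in> (\<lambda>(a,x). a#x) ` ({..<n} \<times> grp ns)" using zx by auto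
  next
    assume "z \<in> (\<lambda>(a,x). a#x) ` ({..<n} \<times> grp ns)"
    then show "z \<in> grp (n#ns)" by (auto simp: grp_def nth_Cons split: nat.splits)
  qed
qed

lemma inj_Cons2: "inj_on (\<lambda>(a::nat,x::nat list). a#x) A"
  by (auto simp: inj_on_def)

lemma finite_grp: "finite (grp ns)"
  by (induction ns) (auto simp: grp_Nil grp_Cons)

lemma card_grp_Cons: "card (grp (n#ns)) = n * card (grp ns)"
  by (simp add: grp_Cons card_image[OF inj_Cons2] card_cartesian_product)

lemma sum_grp_Cons: "(\<Sum>z\<in>grp (n#ns). f z) = (\<Sum>a<n. \<Sum>x\<in>grp ns. f (a#x))"
  unfolding grp_Cons sum.reindex[OF inj_Cons2] by (simp add: sum.cartesian_product split_def)

lemma orth: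
  assumes "\<forall>t<length ns. 0 < ns ! t"
  shows "(\<Sum>x\<in>grp ns. \<Prod>t<length ns. chr (ns!t) (int (x!t) * u t))
     = (if \<forall>t<length ns. u t mod int (ns!t) = 0 then of_nat (card (grp ns)) else 0)"
  using assms
proof (induction ns arbitrary: u)
  case Nil
  then show ?case by (simp add: grp_Nil)
next
  case (Cons n ns)
  have n: "0 < n" using Cons.prems by auto
  have IH: "(\<Sum>x\<in>grp ns. \<Prod>t<length ns. chr (ns!t) (int (x!t) * u (Suc t)))
     = (if \<forall>t<length ns. u (Suc t) mod int (ns!t) = 0 then of_nat (card (grp ns)) else 0)"
    using Cons.IH[of "\<lambda>t. u (Suc t)"] Cons.prems by fastforce
  have "(\<Sum>x\<in>grp (n#ns). \<Prod>t<length (n#ns). chr ((n#ns)!t) (int (x!t) * u t))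
      = (\<Sum>a<n. \<Sum>x\<in>grp ns. chr n (int a * u 0) * (\<Prod>t<length ns. chr (ns!t) (int (x!t) * u (Suc t))))"
    unfolding sum_grp_Cons length_Cons prod.lessThan_Suc_shift by simp
  also have "\<dots> = (\<Sum>a<n. chr n (int a * u 0)) * (\<Sum>x\<in>grp ns. \<Prod>t<length ns. chr (ns!t) (int (x!t) * u (Suc t)))"
    by (simp add: sum_product)
  also have "\<dots> = (if \<forall>t<length (n#ns). u t mod int ((n#ns)!t) = 0 then of_nat (card (grp (n#ns))) else 0)"
    unfolding IH sum_chr[OF n] card_grp_Cons
    by (auto simp: All_less_Suc2)
  finally show ?case .
qed

lemma len_gadd[simp]: "length (gadd ns x y) = length ns" by (simp add: gadd_def)
lemma len_gsub[simp]: "length (gsub ns x y) = length ns" by (simp add: gsub_def)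
lemma gadd_nth: "t < length ns \<Longrightarrow> gadd ns x y ! t = (x!t + y!t) mod ns!t"
  by (simp add: gadd_def)
lemma gneg_nth: "t < length ns \<Longrightarrow> gneg ns x ! t = (ns!t - x!t) mod ns!t"
  by (simp add: gneg_def)
lemma gsub_nth: "t < length ns \<Longrightarrow> gsub ns x y ! t = (x!t + (ns!t - y!t) mod ns!t) mod ns!t"
  by (simp add: gsub_def gadd_nth gneg_nth)

lemma gadd_grp: "\<forall>t<length ns. 0 < ns ! t \<Longrightarrow> gadd ns x y \<in> grp ns"
  by (simp add: grp_def gadd_nth)
lemma gsub_grp: "\<forall>t<length ns. 0 < ns ! t \<Longrightarrow> gsub ns x y \<in> grp ns"
  by (simp add: grp_def gsub_nth)
lemma gzero_grp: "\<forall>t<length ns. 0 < ns ! t \<Longrightarrow> gzero ns \<in> grp ns"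
  by (simp add: grp_def gzero_def)

lemma int_gadd: "t < length ns \<Longrightarrow> int (gadd ns x y ! t) = (int (x!t) + int (y!t)) mod int (ns!t)"
  by (simp add: gadd_nth zmod_int)

lemma int_gsub: assumes "t < length ns" "y \<in> grp ns"
  shows "int (gsub ns x y ! t) = (int (x!t) - int (y!t)) mod int (ns!t)"
proof -
  have y: "y!t < ns!t" using assms by (auto simp: grp_def)
  have "int (gsub ns x y ! t) = (int (x!t) + (int (ns!t) - int (y!t)) mod int (ns!t)) mod int (ns!t)"
    using assms(1) y by (simp add: gsub_nth zmod_int of_nat_diff)
  also have "\<dots> = (int (x!t) - int (y!t)) mod int (ns!t)"
    by (metis add_diff_eq diff_add_eq mod_add_right_eq mod_add_self2)
  finally show ?thesis .
qed

lemma grp_eq: assumes "x \<in> grp ns" "y \<in> grp ns"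
  shows "x = y \<longleftrightarrow> (\<forall>t<length ns. int (x!t) mod int (ns!t) = int (y!t) mod int (ns!t))"
proof
  assume h: "\<forall>t<length ns. int (x!t) mod int (ns!t) = int (y!t) mod int (ns!t)"
  show "x = y"
  proof (rule nth_equalityI)
    show "length x = length y" using assms by (simp add: grp_def)
    fix t assume "t < length x"
    then have t: "t < length ns" using assms by (simp add: grp_def)
    then have "x!t < ns!t" "y!t < ns!t" using assms by (auto simp: grp_def)
    then show "x!t = y!t" using h t by (metis mod_less of_nat_eq_iff zmod_int)
  qed
qed simp

lemma solve: assumes "x \<in> grp ns" "a \<in> grp ns" "b \<in> grp ns" "\<forall>t<length ns. 0 < ns ! t"
  shows "(\<forall>t<length ns. (int (x!t) + int (a!t) - int (b!t)) mod int (ns!t) = 0) \<longleftrightarrow> x = gsub ns b a"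
proof -
  have "x = gsub ns b a \<longleftrightarrow> (\<forall>t<length ns. int (x!t) mod int (ns!t) = int (gsub ns b a!t) mod int (ns!t))"
    using grp_eq[OF assms(1) gsub_grp[OF assms(4)]] .
  also have "\<dots> \<longleftrightarrow> (\<forall>t<length ns. (int (x!t) + int (a!t) - int (b!t)) mod int (ns!t) = 0)"
  proof -
    have "int (x!t) mod int (ns!t) = int (gsub ns b a!t) mod int (ns!t) \<longleftrightarrow>
          (int (x!t) + int (a!t) - int (b!t)) mod int (ns!t) = 0" if t: "t < length ns" for t
    proof -
      have "int (gsub ns b a!t) mod int (ns!t) = (int (b!t) - int (a!t)) mod int (ns!t)"
        using int_gsub[OF t assms(2)] by simp
      then have "int (x!t) mod int (ns!t) = int (gsub ns b a!t) mod int (ns!t) \<longleftrightarrow>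
          int (x!t) mod int (ns!t) = (int (b!t) - int (a!t)) mod int (ns!t)" by simp
      also have "\<dots> \<longleftrightarrow> int (ns!t) dvd (int (x!t) - (int (b!t) - int (a!t)))" by (rule mod_eq_dvd_iff)
      also have "int (x!t) - (int (b!t) - int (a!t)) = int (x!t) + int (a!t) - int (b!t)" by simp
      finally show ?thesis by (simp add: dvd_eq_mod_eq_0)
    qed
    then show ?thesis by blast
  qed
  finally show ?thesis by simp
qed

lemma fourier_chr: "fourier ns x y = (\<Prod>t<length ns. chr (ns!t) (int (x!t) * int (y!t)))"
  by (simp add: fourier_def chr_def)

lemma prod_chr2:
  assumes "\<forall>t<length ns. 0 < ns ! t"
    and "\<forall>t<length ns. (f t + g t) mod int (ns!t) = h t mod int (ns!t)"
  shows "(\<Prod>t<length ns. chr (ns!t) (f t)) * (\<Prod>t<length ns. chr (ns!t) (g t))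
       = (\<Prod>t<length ns. chr (ns!t) (h t))"
proof -
  have "(\<Prod>t<length ns. chr (ns!t) (f t)) * (\<Prod>t<length ns. chr (ns!t) (g t))
      = (\<Prod>t<length ns. chr (ns!t) (f t + g t))"
    by (simp add: prod.distrib[symmetric] chr_add)
  also have "\<dots> = (\<Prod>t<length ns. chr (ns!t) (h t))"
    using assms by (intro prod.cong refl chr_cong) auto
  finally show ?thesis .
qed

lemma mod_aux: "(x + (y mod m) * (z mod m)) mod m = (x + y * z) mod (m::int)"
  by (metis mod_add_right_eq mod_mult_eq)

lemma gzero_nth: "t < length ns \<Longrightarrow> gzero ns ! t = 0" by (simp add: gzero_def)

lemma LL:
  assumes pos: "\<forall>t<length ms. 0 < ms ! t" and H: "a \<in> grp ms" "c \<in> grp ms" "c' \<in> grp ms" "e \<in> grp ms"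
  shows "fourier ms a c * fourier ms (gsub ms a (gzero ms)) (gsub ms c' e)
    = (\<Prod>t<length ms. chr (ms!t) (int (a!t) * (int (c'!t) + int (c!t) - int (e!t))))"
  unfolding fourier_chr
proof (rule prod_chr2[OF pos], intro allI impI)
  fix t assume t: "t < length ms"
  have z: "gzero ms \<in> grp ms" using gzero_grp[OF pos] .
  show "(int (a ! t) * int (c ! t) + int (gsub ms a (gzero ms) ! t) * int (gsub ms c' e ! t)) mod int (ms ! t) =
         int (a ! t) * (int (c' ! t) + int (c ! t) - int (e ! t)) mod int (ms ! t)"
    unfolding int_gsub[OF t z] int_gsub[OF t H(4)] mod_aux by (simp add: gzero_nth t algebra_simps)
qed

lemma FF:
  assumes pos: "\<forall>t<length ns. 0 < ns ! t" and G: "i \<in> grp ns" "j \<in> grp ns" "k \<in> grp ns" "l \<in> grp ns" "k0 \<in> grp ns"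
  shows "fourier ns (gsub ns i j) (gsub ns k l) * fourier ns l k0
    = (\<Prod>t<length ns. chr (ns!t) ((int (i!t) - int (j!t)) * int (k!t)))
      * (\<Prod>t<length ns. chr (ns!t) (int (l!t) * (int (j!t) + int (k0!t) - int (i!t))))"
proof -
  define h where "h t = (int (i!t) - int (j!t)) * int (k!t) + int (l!t) * (int (j!t) + int (k0!t) - int (i!t))" for t
  have 1: "fourier ns (gsub ns i j) (gsub ns k l) * fourier ns l k0 = (\<Prod>t<length ns. chr (ns!t) (h t))"
    unfolding fourier_chr
  proof (rule prod_chr2[OF pos], intro allI impI)
    fix t assume t: "t < length ns"
    show "(int (gsub ns i j ! t) * int (gsub ns k l ! t) + int (l ! t) * int (k0 ! t)) mod int (ns ! t) = h t mod int (ns ! t)"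
      unfolding int_gsub[OF t G(2)] int_gsub[OF t G(4)] mod_aux[of "int (l ! t) * int (k0 ! t)", simplified add.commute]
      by (simp add: h_def algebra_simps)
  qed
  have 2: "(\<Prod>t<length ns. chr (ns!t) ((int (i!t) - int (j!t)) * int (k!t)))
      * (\<Prod>t<length ns. chr (ns!t) (int (l!t) * (int (j!t) + int (k0!t) - int (i!t))))
      = (\<Prod>t<length ns. chr (ns!t) (h t))"
    by (rule prod_chr2[OF pos]) (simp add: h_def)
  show ?thesis using 1 2 by simp
qed

lemma triple_sum:
  fixes \<alpha> :: "'c \<Rightarrow> complex"
  shows "(\<Sum>l\<in>A. \<Sum>a\<in>B. \<Sum>j\<in>C. \<alpha> j * \<beta> a * \<gamma> j l) = (\<Sum>j\<in>C. \<alpha> j * (\<Sum>a\<in>B. \<beta> a) * (\<Sum>l\<in>A. \<gamma> j l))"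
proof -
  have "(\<Sum>l\<in>A. \<Sum>a\<in>B. \<Sum>j\<in>C. \<alpha> j * \<beta> a * \<gamma> j l) = (\<Sum>a\<in>B. \<Sum>l\<in>A. \<Sum>j\<in>C. \<alpha> j * \<beta> a * \<gamma> j l)"
    by (rule sum.swap)
  also have "\<dots> = (\<Sum>a\<in>B. \<Sum>j\<in>C. \<Sum>l\<in>A. \<alpha> j * \<beta> a * \<gamma> j l)"
    by (intro sum.cong refl sum.swap)
  also have "\<dots> = (\<Sum>j\<in>C. \<Sum>a\<in>B. \<Sum>l\<in>A. \<alpha> j * \<beta> a * \<gamma> j l)"
    by (rule sum.swap)
  also have "\<dots> = (\<Sum>j\<in>C. \<Sum>a\<in>B. \<alpha> j * \<beta> a * (\<Sum>l\<in>A. \<gamma> j l))"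
    by (simp only: sum_distrib_left)
  also have "\<dots> = (\<Sum>j\<in>C. (\<Sum>a\<in>B. \<alpha> j * \<beta> a) * (\<Sum>l\<in>A. \<gamma> j l))"
    by (simp only: sum_distrib_right)
  also have "\<dots> = (\<Sum>j\<in>C. \<alpha> j * (\<Sum>a\<in>B. \<beta> a) * (\<Sum>l\<in>A. \<gamma> j l))"
    by (simp only: sum_distrib_left)
  finally show ?thesis .
qed

lemma card_grp_pos: "\<forall>t<length ns. 0 < ns ! t \<Longrightarrow> card (grp ns) > 0"
  using gzero_grp finite_grp card_gt_0_iff by blast

lemma part1:
  fixes Q :: "nat list \<Rightarrow> nat list \<Rightarrow> complex"
  assumes pn: "\<forall>t<length ns. 0 < ns ! t" and pm: "\<forall>t<length ms. 0 < ms ! t"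
    and i: "i \<in> grp ns" and c: "c \<in> grp ms" and k0: "k0 \<in> grp ns" and e: "e \<in> grp ms"
    and k: "k \<in> grp ns" and c': "c' \<in> grp ms"
  shows "matvec ns ms (Pmat ns ms Q i c) (eps ns k0 e) (k, c')
     = (Q i (gsub ms e c) * Q (gsub ns i k0) e / (Q i e * Q (gsub ns i k0) (gsub ms e c)))
       * eps ns k0 (gsub ms e c) (k, c')"
proof -
  define G where "G = grp ns"
  define H where "H = grp ms"
  define M where "M = card G"
  define N where "N = card H"
  define Qf where "Qf j = Q i c' * Q j e / (Q i e * Q j c')" for j
  define \<alpha> where "\<alpha> j = (1 / (of_nat M * of_nat N)) * Qf j * (\<Prod>t<length ns. chr (ns!t) ((int (i!t) - int (j!t)) * int (k!t)))" for j
  define \<beta> where "\<beta> a = (\<Prod>t<length ms. chr (ms!t) (int (a!t) * (int (c'!t) + int (c!t) - int (e!t))))" for a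
  define \<gamma> where "\<gamma> j l = (\<Prod>t<length ns. chr (ns!t) (int (l!t) * (int (j!t) + int (k0!t) - int (i!t))))" for j l
  define j0 where "j0 = gsub ns i k0"
  have j0: "j0 \<in> G" unfolding j0_def G_def using gsub_grp[OF pn] .
  have fG: "finite G" and fH: "finite H" by (simp_all add: G_def H_def finite_grp)
  have M0: "M > 0" unfolding M_def G_def using card_grp_pos[OF pn] .
  have N0: "N > 0" unfolding N_def H_def using card_grp_pos[OF pm] .
  have S1: "matvec ns ms (Pmat ns ms Q i c) (eps ns k0 e) (k, c')
      = (\<Sum>l\<in>G. Pmat ns ms Q i c (k, c') (l, e) * fourier ns l k0)"
    unfolding matvec_def sum.cartesian_product' G_def
  proof (rule sum.cong[OF refl])
    fix l show "(\<Sum>d\<in>grp ms. Pmat ns ms Q i c (k, c') (l, d) * eps ns k0 e (l, d)) =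
        Pmat ns ms Q i c (k, c') (l, e) * fourier ns l k0"
    proof -
      have "(\<Sum>d\<in>grp ms. Pmat ns ms Q i c (k, c') (l, d) * eps ns k0 e (l, d))
         = (\<Sum>d\<in>grp ms. if d = e then Pmat ns ms Q i c (k, c') (l, e) * fourier ns l k0 else 0)"
        by (rule sum.cong[OF refl]) (simp add: eps_def)
      also have "\<dots> = Pmat ns ms Q i c (k, c') (l, e) * fourier ns l k0"
        using e by (simp only: sum.delta[OF finite_grp] if_True)
      finally show ?thesis .
    qed
  qed
  have S2: "Pmat ns ms Q i c (k, c') (l, e) * fourier ns l k0 = (\<Sum>a\<in>H. \<Sum>j\<in>G. \<alpha> j * \<beta> a * \<gamma> j l)"
    if l: "l \<in> G" for l
    unfolding Pmat_def sum_distrib_right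
  proof (unfold H_def G_def, intro sum.cong refl)
    fix a j assume a: "a \<in> grp ms" and j: "j \<in> grp ns"
    have "fourier ms a c * Wmat ns ms Q i a j (gzero ms) (k, c') (l, e) * fourier ns l k0
      = (1 / (of_nat M * of_nat N)) * Qf j
        * (fourier ms a c * fourier ms (gsub ms a (gzero ms)) (gsub ms c' e))
        * (fourier ns (gsub ns i j) (gsub ns k l) * fourier ns l k0)"
      unfolding Wmat_def Qf_def M_def N_def G_def H_def prod.case by (simp only: mult_ac)
    also have "\<dots> = \<alpha> j * \<beta> a * \<gamma> j l"
      unfolding LL[OF pm a c c' e] FF[OF pn i j k l[unfolded G_def] k0] \<alpha>_def \<beta>_def \<gamma>_def
      by (simp only: mult_ac)
    finally show "fourier ms a c * Wmat ns ms Q i a j (gzero ms) (k, c') (l, e) * fourier ns l k0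
      = \<alpha> j * \<beta> a * \<gamma> j l" .
  qed
  have S4: "(\<Sum>a\<in>H. \<beta> a) = (if c' = gsub ms e c then of_nat N else 0)"
    unfolding \<beta>_def H_def N_def orth[OF pm] solve[OF c' c e pm] by (rule refl)
  have S5: "(\<Sum>l\<in>G. \<gamma> j l) = (if j = j0 then of_nat M else 0)" if j: "j \<in> G" for j
    unfolding \<gamma>_def G_def M_def orth[OF pn] j0_def solve[OF j[unfolded G_def] k0 i pn] by (rule refl)
  have P0: "(\<Prod>t<length ns. chr (ns!t) ((int (i!t) - int (j0!t)) * int (k!t))) = fourier ns k k0"
    unfolding fourier_chr
  proof (intro prod.cong refl chr_cong)
    fix t assume "t \<in> {..<length ns}"
    then have t: "t < length ns" by simp
    then show "0 < ns ! t" using pn by simp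
    show "(int (i ! t) - int (j0 ! t)) * int (k ! t) mod int (ns ! t) = int (k ! t) * int (k0 ! t) mod int (ns ! t)"
      unfolding j0_def int_gsub[OF t k0]
    proof -
      let ?n = "int (ns ! t)"
      have "(int (i ! t) - (int (i ! t) - int (k0 ! t)) mod ?n) mod ?n = int (k0 ! t) mod ?n"
        by (simp add: mod_diff_right_eq)
      then have "(int (i ! t) - (int (i ! t) - int (k0 ! t)) mod ?n) * int (k ! t) mod ?n = int (k0 ! t) * int (k ! t) mod ?n"
        by (metis mod_mult_left_eq)
      then show "(int (i ! t) - (int (i ! t) - int (k0 ! t)) mod ?n) * int (k ! t) mod ?n = int (k ! t) * int (k0 ! t) mod ?n"
        by (simp add: mult.commute)
    qed
  qed
  then have aj0: "\<alpha> j0 = (1 / (of_nat M * of_nat N)) * Qf j0 * fourier ns k k0" by (simp add: \<alpha>_def)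
  have "matvec ns ms (Pmat ns ms Q i c) (eps ns k0 e) (k, c') = (\<Sum>l\<in>G. \<Sum>a\<in>H. \<Sum>j\<in>G. \<alpha> j * \<beta> a * \<gamma> j l)"
    unfolding S1 using S2 by (rule sum.cong[OF refl])
  also have "\<dots> = (\<Sum>j\<in>G. \<alpha> j * (\<Sum>a\<in>H. \<beta> a) * (\<Sum>l\<in>G. \<gamma> j l))" by (rule triple_sum)
  also have "\<dots> = (\<Sum>j\<in>G. if j = j0 then \<alpha> j * (\<Sum>a\<in>H. \<beta> a) * of_nat M else 0)"
    by (rule sum.cong[OF refl]) (simp add: S5)
  also have "\<dots> = \<alpha> j0 * (\<Sum>a\<in>H. \<beta> a) * of_nat M" by (simp only: sum.delta[OF fG] j0 if_True)
  finally have chain: "matvec ns ms (Pmat ns ms Q i c) (eps ns k0 e) (k, c') = \<alpha> j0 * (\<Sum>a\<in>H. \<beta> a) * of_nat M" .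
  show ?thesis
  proof (cases "c' = gsub ms e c")
    case True
    then show ?thesis unfolding chain S4 aj0 using M0 N0 by (simp add: eps_def Qf_def j0_def field_simps)
  next
    case False
    then show ?thesis unfolding chain S4 by (simp add: eps_def)
  qed
qed


lemma mod_aux2: "(X mod m + Y mod m - E) mod m = (X + Y - E) mod (m::int)"
  by (metis mod_add_eq mod_diff_left_eq)

lemma mod_aux3: "(((a - s) mod m - c) mod m + (c + s) mod m - a) mod m = (0::int)"
proof -
  have "(((a - s) mod m - c) mod m + (c + s) mod m - a) mod m = ((a - s) mod m - c + (c + s) - a) mod m"
    by (rule mod_aux2)
  also have "(a - s) mod m - c + (c + s) - a = (a - s) mod m + (s - a)" by simp
  also have "((a - s) mod m + (s - a)) mod m = ((a - s) + (s - a)) mod m" by (rule mod_add_left_eq)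
  finally show ?thesis by simp
qed

lemma gsub_gsub:
  assumes pm: "\<forall>t<length ms. 0 < ms ! t" and H: "e \<in> grp ms" "S \<in> grp ms" "c \<in> grp ms"
  shows "gsub ms (gsub ms e S) c = gsub ms e (gadd ms c S)"
proof -
  have "(\<forall>t<length ms. (int (gsub ms (gsub ms e S) c ! t) + int (gadd ms c S ! t) - int (e!t)) mod int (ms!t) = 0)"
  proof (intro allI impI)
    fix t assume t: "t < length ms"
    show "(int (gsub ms (gsub ms e S) c ! t) + int (gadd ms c S ! t) - int (e!t)) mod int (ms!t) = 0"
      unfolding int_gsub[OF t H(3)] int_gsub[OF t H(2)] int_gadd[OF t]
      by (rule mod_aux3)
  qed
  then show ?thesis using solve[OF gsub_grp[OF pm] gadd_grp[OF pm] H(1) pm] by blast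
qed

lemma gsub_gzero:
  assumes pm: "\<forall>t<length ms. 0 < ms ! t" and H: "e \<in> grp ms"
  shows "gsub ms e (gzero ms) = e"
  using solve[OF H gzero_grp[OF pm] H pm] by (simp add: gzero_nth)

lemma foldr_grp:
  assumes pm: "\<forall>t<length ms. 0 < ms ! t"
  shows "foldr (gadd ms) cs (gzero ms) \<in> grp ms"
  by (cases cs) (simp_all add: gzero_grp[OF pm] gadd_grp[OF pm])

lemma part2:
  fixes Q :: "nat list \<Rightarrow> nat list \<Rightarrow> complex"
  assumes pn: "\<forall>t<length ns. 0 < ns ! t" and pm: "\<forall>t<length ms. 0 < ms ! t"
    and k: "k \<in> grp ns" and e: "e \<in> grp ms"
  shows "set ics \<subseteq> grp ns \<times> grp ms \<Longrightarrow> \<exists>\<mu>. \<forall>r\<in>grp ns \<times> grp ms.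
     Pprod_apply ns ms Q ics (eps ns k e) r = \<mu> * eps ns k (gsub ms e (foldr (gadd ms) (map snd ics) (gzero ms))) r"
proof (induction ics)
  case Nil
  then show ?case by (intro exI[of _ 1]) (simp add: Pprod_apply_def gsub_gzero[OF pm e])
next
  case (Cons ic ics)
  obtain i c where ic: "ic = (i, c)" by fastforce
  have i: "i \<in> grp ns" and c: "c \<in> grp ms" using Cons.prems ic by auto
  obtain \<mu> where \<mu>: "\<forall>r\<in>grp ns \<times> grp ms.
     Pprod_apply ns ms Q ics (eps ns k e) r = \<mu> * eps ns k (gsub ms e (foldr (gadd ms) (map snd ics) (gzero ms))) r"
    using Cons by auto
  define S where "S = foldr (gadd ms) (map snd ics) (gzero ms)"
  define e' where "e' = gsub ms e S"
  have S: "S \<in> grp ms" unfolding S_def by (rule foldr_grp[OF pm])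
  have e': "e' \<in> grp ms" unfolding e'_def by (rule gsub_grp[OF pm])
  define coef where "coef = Q i (gsub ms e' c) * Q (gsub ns i k) e' / (Q i e' * Q (gsub ns i k) (gsub ms e' c))"
  have "\<forall>r\<in>grp ns \<times> grp ms. Pprod_apply ns ms Q ((i,c) # ics) (eps ns k e) r
     = (\<mu> * coef) * eps ns k (gsub ms e (foldr (gadd ms) (map snd ((i,c) # ics)) (gzero ms))) r"
  proof
    fix r assume r: "r \<in> grp ns \<times> grp ms"
    obtain k1 c1 where r1: "r = (k1, c1)" by fastforce
    have "Pprod_apply ns ms Q ((i,c) # ics) (eps ns k e) r
        = matvec ns ms (Pmat ns ms Q i c) (Pprod_apply ns ms Q ics (eps ns k e)) r"
      by (simp add: Pprod_apply_def)
    also have "\<dots> = \<mu> * matvec ns ms (Pmat ns ms Q i c) (eps ns k e') r"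
      unfolding matvec_def sum_distrib_left
    proof (intro sum.cong refl)
      fix x assume "x \<in> grp ns \<times> grp ms"
      then have "Pprod_apply ns ms Q ics (eps ns k e) x = \<mu> * eps ns k e' x"
        using \<mu> unfolding e'_def S_def by blast
      then show "Pmat ns ms Q i c r x * Pprod_apply ns ms Q ics (eps ns k e) x = \<mu> * (Pmat ns ms Q i c r x * eps ns k e' x)"
        by (simp add: mult_ac)
    qed
    also have "\<dots> = \<mu> * (coef * eps ns k (gsub ms e' c) r)"
      using part1[OF pn pm i c k e' _ _, of k1 c1 Q] r r1 by (simp add: coef_def)
    also have "gsub ms e' c = gsub ms e (foldr (gadd ms) (map snd ((i,c) # ics)) (gzero ms))"
      unfolding e'_def using gsub_gsub[OF pm e S c] by (simp add: S_def)
    finally show "Pprod_apply ns ms Q ((i,c) # ics) (eps ns k e) r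
     = (\<mu> * coef) * eps ns k (gsub ms e (foldr (gadd ms) (map snd ((i,c) # ics)) (gzero ms))) r"
      by simp
  qed
  then show ?case unfolding ic by blast
qed

theorem lemma3p9:
  fixes ns ms :: "nat list" and Q :: "nat list \<Rightarrow> nat list \<Rightarrow> complex"
  assumes "\<forall>t<length ns. 0 < ns ! t"
    and "\<forall>t<length ms. 0 < ms ! t"
    and "\<forall>i\<in>grp ns. \<forall>c\<in>grp ms. cmod (Q i c) = 1"
  shows "(\<forall>i\<in>grp ns. \<forall>c\<in>grp ms. \<forall>k\<in>grp ns. \<forall>e\<in>grp ms. \<forall>r\<in>grp ns \<times> grp ms.
            matvec ns ms (Pmat ns ms Q i c) (eps ns k e) r
            = (Q i (gsub ms e c) * Q (gsub ns i k) e / (Q i e * Q (gsub ns i k) (gsub ms e c)))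
              * eps ns k (gsub ms e c) r)
       \<and> (\<forall>ics. set ics \<subseteq> grp ns \<times> grp ms \<longrightarrow>
            foldr (gadd ms) (map snd ics) (gzero ms) = gzero ms \<longrightarrow>
            (\<forall>k\<in>grp ns. \<forall>e\<in>grp ms. \<exists>\<mu>::complex. \<forall>r\<in>grp ns \<times> grp ms.
               Pprod_apply ns ms Q ics (eps ns k e) r = \<mu> * eps ns k e r))"
proof (intro conjI ballI allI impI)
  fix i c k e r assume "i \<in> grp ns" "c \<in> grp ms" "k \<in> grp ns" "e \<in> grp ms" "r \<in> grp ns \<times> grp ms"
  then show "matvec ns ms (Pmat ns ms Q i c) (eps ns k e) r
            = (Q i (gsub ms e c) * Q (gsub ns i k) e / (Q i e * Q (gsub ns i k) (gsub ms e c)))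
              * eps ns k (gsub ms e c) r"
    using part1[OF assms(1,2)] by (cases r) auto
next
  fix ics k e
  assume h: "set ics \<subseteq> grp ns \<times> grp ms" "foldr (gadd ms) (map snd ics) (gzero ms) = gzero ms"
    and k: "k \<in> grp ns" and e: "e \<in> grp ms"
  show "\<exists>\<mu>::complex. \<forall>r\<in>grp ns \<times> grp ms. Pprod_apply ns ms Q ics (eps ns k e) r = \<mu> * eps ns k e r"
    using part2[OF assms(1,2) k e h(1), of Q] h(2) gsub_gzero[OF assms(2) e] by simp
qed

end
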